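(* Let $*$ (revision) and $\div$ (contraction) be operators on belief states satisfying the standing assumptions described in the context. Consider the principle (EHI) for all belief states $\Psi$ and sentences $A,B$: $[(\Psi \div A) * B] = [\Psi * B] \cap [(\Psi * \neg A) * B]$, and the principle (EHIC) for all belief states $\Psi$ and sentences $A,B$: $[(\Psi \div A) \div B] = [\Psi] \cap [\Psi * \neg B] \cap [\Psi * \neg A] \cap [(\Psi * \neg A) * \neg B]$. Then EHI entails EHIC. Moreover, if $*$ satisfies (AGM$*3$) $[\Psi * A] \subseteq \mathrm{Cn}([\Psi] \cup \{A\})$ and the operators satisfy the Levi Identity (LI) $[\Psi * A] = \mathrm{Cn}([\Psi \div \neg A] \cup \{A\})$ for all $\Psi, A$, then EHI and EHIC are equivalent.
   Context: $L$ is a finitely generated propositional language; $\mathrm{Cn}$ denotes classical logical consequence. Belief states $\Psi$ are primitive objects, each determining a deductively closed belief set $[\Psi] \subseteq L$. A revision operator $*$ and a contraction operator $\div$ map a belief state $\Psi$ and a sentence $A$ to belief states $\Psi * A$ and $\Psi \div A$. Standing assumptions: $*$ satisfies the AGM revision postulates, $\div$ satisfies the AGM contraction postulates (in particular, if $\mathrm{Cn}(A)=\mathrm{Cn}(B)$ then $[\Psi \div A] = [\Psi \div B]$ and $[\Psi * A]=[\Psi*B]$), and the Harper Identity holds: $[\Psi \div A] = [\Psi] \cap [\Psi * \neg A]$ for all $\Psi, A$. *)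

theory Defs
  imports Main
begin

text \<open>Atoms range over a finite type, so the language is finitely generated.\<close>

datatype 'a form =
    Atom 'a
  | Bot
  | Neg "'a form"
  | Conj "'a form" "'a form"
  | Disj "'a form" "'a form"
  | Imp "'a form" "'a form"

fun eval :: "('a \<Rightarrow> bool) \<Rightarrow> 'a form \<Rightarrow> bool" where
  "eval v (Atom p) = v p"
| "eval v Bot = False"
| "eval v (Neg A) = (\<not> eval v A)"
| "eval v (Conj A B) = (eval v A \<and> eval v B)"
| "eval v (Disj A B) = (eval v A \<or> eval v B)"
| "eval v (Imp A B) = (eval v A \<longrightarrow> eval v B)"

definition Cn :: "'a form set \<Rightarrow> 'a form set" where
  "Cn S = {A. \<forall>v. (\<forall>B\<in>S. eval v B) \<longrightarrow> eval v A}"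

text \<open>Belief states have type 'b; bs maps a state to its belief set.\<close>

definition belief_sets_closed :: "('b \<Rightarrow> ('a::finite) form set) \<Rightarrow> bool" where
  "belief_sets_closed bs \<longleftrightarrow> (\<forall>\<Psi>. Cn (bs \<Psi>) = bs \<Psi>)"

definition agm_revision ::
  "('b \<Rightarrow> ('a::finite) form set) \<Rightarrow> ('b \<Rightarrow> 'a form \<Rightarrow> 'b) \<Rightarrow> bool" where
  "agm_revision bs rv \<longleftrightarrow>
     (\<forall>\<Psi> A. Cn (bs (rv \<Psi> A)) = bs (rv \<Psi> A)) \<and>
     (\<forall>\<Psi> A. A \<in> bs (rv \<Psi> A)) \<and>
     (\<forall>\<Psi> A. bs (rv \<Psi> A) \<subseteq> Cn (bs \<Psi> \<union> {A})) \<and>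
     (\<forall>\<Psi> A. Neg A \<notin> bs \<Psi> \<longrightarrow> Cn (bs \<Psi> \<union> {A}) \<subseteq> bs (rv \<Psi> A)) \<and>
     (\<forall>\<Psi> A. Neg A \<notin> Cn {} \<longrightarrow> Bot \<notin> bs (rv \<Psi> A)) \<and>
     (\<forall>\<Psi> A B. Cn {A} = Cn {B} \<longrightarrow> bs (rv \<Psi> A) = bs (rv \<Psi> B)) \<and>
     (\<forall>\<Psi> A B. bs (rv \<Psi> (Conj A B)) \<subseteq> Cn (bs (rv \<Psi> A) \<union> {B})) \<and>
     (\<forall>\<Psi> A B. Neg B \<notin> bs (rv \<Psi> A) \<longrightarrow>
                Cn (bs (rv \<Psi> A) \<union> {B}) \<subseteq> bs (rv \<Psi> (Conj A B)))"

definition agm_contraction ::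
  "('b \<Rightarrow> ('a::finite) form set) \<Rightarrow> ('b \<Rightarrow> 'a form \<Rightarrow> 'b) \<Rightarrow> bool" where
  "agm_contraction bs ct \<longleftrightarrow>
     (\<forall>\<Psi> A. Cn (bs (ct \<Psi> A)) = bs (ct \<Psi> A)) \<and>
     (\<forall>\<Psi> A. bs (ct \<Psi> A) \<subseteq> bs \<Psi>) \<and>
     (\<forall>\<Psi> A. A \<notin> bs \<Psi> \<longrightarrow> bs (ct \<Psi> A) = bs \<Psi>) \<and>
     (\<forall>\<Psi> A. A \<notin> Cn {} \<longrightarrow> A \<notin> bs (ct \<Psi> A)) \<and>
     (\<forall>\<Psi> A. bs \<Psi> \<subseteq> Cn (bs (ct \<Psi> A) \<union> {A})) \<and>
     (\<forall>\<Psi> A B. Cn {A} = Cn {B} \<longrightarrow> bs (ct \<Psi> A) = bs (ct \<Psi> B)) \<and>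
     (\<forall>\<Psi> A B. bs (ct \<Psi> A) \<inter> bs (ct \<Psi> B) \<subseteq> bs (ct \<Psi> (Conj A B))) \<and>
     (\<forall>\<Psi> A B. A \<notin> bs (ct \<Psi> (Conj A B)) \<longrightarrow>
                bs (ct \<Psi> (Conj A B)) \<subseteq> bs (ct \<Psi> A))"

definition harper_identity ::
  "('b \<Rightarrow> 'a form set) \<Rightarrow> ('b \<Rightarrow> 'a form \<Rightarrow> 'b) \<Rightarrow> ('b \<Rightarrow> 'a form \<Rightarrow> 'b) \<Rightarrow> bool" where
  "harper_identity bs rv ct \<longleftrightarrow>
     (\<forall>\<Psi> A. bs (ct \<Psi> A) = bs \<Psi> \<inter> bs (rv \<Psi> (Neg A)))"

definition levi_identity ::
  "('b \<Rightarrow> 'a form set) \<Rightarrow> ('b \<Rightarrow> 'a form \<Rightarrow> 'b) \<Rightarrow> ('b \<Rightarrow> 'a form \<Rightarrow> 'b) \<Rightarrow> bool" where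
  "levi_identity bs rv ct \<longleftrightarrow>
     (\<forall>\<Psi> A. bs (rv \<Psi> A) = Cn (bs (ct \<Psi> (Neg A)) \<union> {A}))"

definition agm_rev3 :: "('b \<Rightarrow> 'a form set) \<Rightarrow> ('b \<Rightarrow> 'a form \<Rightarrow> 'b) \<Rightarrow> bool" where
  "agm_rev3 bs rv \<longleftrightarrow> (\<forall>\<Psi> A. bs (rv \<Psi> A) \<subseteq> Cn (bs \<Psi> \<union> {A}))"

definition EHI ::
  "('b \<Rightarrow> 'a form set) \<Rightarrow> ('b \<Rightarrow> 'a form \<Rightarrow> 'b) \<Rightarrow> ('b \<Rightarrow> 'a form \<Rightarrow> 'b) \<Rightarrow> bool" where
  "EHI bs rv ct \<longleftrightarrow>
     (\<forall>\<Psi> A B. bs (rv (ct \<Psi> A) B) = bs (rv \<Psi> B) \<inter> bs (rv (rv \<Psi> (Neg A)) B))"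

definition EHIC ::
  "('b \<Rightarrow> 'a form set) \<Rightarrow> ('b \<Rightarrow> 'a form \<Rightarrow> 'b) \<Rightarrow> ('b \<Rightarrow> 'a form \<Rightarrow> 'b) \<Rightarrow> bool" where
  "EHIC bs rv ct \<longleftrightarrow>
     (\<forall>\<Psi> A B. bs (ct (ct \<Psi> A) B) =
        bs \<Psi> \<inter> bs (rv \<Psi> (Neg B)) \<inter> bs (rv \<Psi> (Neg A)) \<inter> bs (rv (rv \<Psi> (Neg A)) (Neg B)))"

end

theory Submission
  imports Defs
begin

lemma Cn_ins:
  assumes "Cn X = X"
  shows "Cn (X \<union> {B}) = {C. Imp B C \<in> X}"
proof
  show "Cn (X \<union> {B}) \<subseteq> {C. Imp B C \<in> X}"
  proof
    fix C assume "C \<in> Cn (X \<union> {B})"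
    hence "Imp B C \<in> Cn X" by (auto simp: Cn_def)
    thus "C \<in> {C. Imp B C \<in> X}" using assms by simp
  qed
next
  show "{C. Imp B C \<in> X} \<subseteq> Cn (X \<union> {B})" by (auto simp: Cn_def)
qed

lemma Cn_inter_closed:
  assumes "Cn X = X" "Cn Y = Y" shows "Cn (X \<inter> Y) = X \<inter> Y"
proof -
  have "Cn (X \<inter> Y) \<subseteq> Cn X \<inter> Cn Y" by (auto simp: Cn_def)
  moreover have "X \<inter> Y \<subseteq> Cn (X \<inter> Y)" by (auto simp: Cn_def)
  ultimately show ?thesis using assms by auto
qed

lemma Cn_int:
  assumes "Cn X = X" "Cn Y = Y"
  shows "Cn ((X \<inter> Y) \<union> {B}) = Cn (X \<union> {B}) \<inter> Cn (Y \<union> {B})"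
proof -
  have "Cn (X \<inter> Y) \<subseteq> Cn X \<inter> Cn Y" by (auto simp: Cn_def)
  moreover have "X \<inter> Y \<subseteq> Cn (X \<inter> Y)" by (auto simp: Cn_def)
  ultimately have "Cn (X \<inter> Y) = X \<inter> Y" using assms by auto
  thus ?thesis using Cn_ins assms by auto
qed

theorem proposition1:
  fixes bs :: "'b \<Rightarrow> ('a::finite) form set"
    and rv :: "'b \<Rightarrow> 'a form \<Rightarrow> 'b"
    and ct :: "'b \<Rightarrow> 'a form \<Rightarrow> 'b"
  assumes "belief_sets_closed bs"
    and "agm_revision bs rv"
    and "agm_contraction bs ct"
    and "harper_identity bs rv ct"
  shows "(EHI bs rv ct \<longrightarrow> EHIC bs rv ct) \<and>
         (agm_rev3 bs rv \<and> levi_identity bs rv ct \<longrightarrow>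
            (EHI bs rv ct \<longleftrightarrow> EHIC bs rv ct))"
proof -
  have H: "\<And>P A. bs (ct P A) = bs P \<inter> bs (rv P (Neg A))"
    using assms(4) by (simp add: harper_identity_def)
  have cl: "\<And>P. Cn (bs P) = bs P" using assms(1) by (simp add: belief_sets_closed_def)
  have ext: "\<And>P A B. Cn {A} = Cn {B} \<Longrightarrow> bs (rv P A) = bs (rv P B)"
    using assms(2) unfolding agm_revision_def by blast
  have nn: "\<And>P B. bs (rv P (Neg (Neg B))) = bs (rv P B)"
    by (rule ext) (auto simp: Cn_def)
  have 1: "EHI bs rv ct \<Longrightarrow> EHIC bs rv ct"
    unfolding EHI_def EHIC_def
  proof (intro allI)
    fix P A B assume e: "\<forall>P A B. bs (rv (ct P A) B) = bs (rv P B) \<inter> bs (rv (rv P (Neg A)) B)"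
    show "bs (ct (ct P A) B) = bs P \<inter> bs (rv P (Neg B)) \<inter> bs (rv P (Neg A)) \<inter> bs (rv (rv P (Neg A)) (Neg B))"
      using H[of "ct P A" B] H[of P A] e by auto
  qed
  have 2: "levi_identity bs rv ct \<Longrightarrow> EHIC bs rv ct \<Longrightarrow> EHI bs rv ct"
    unfolding EHI_def
  proof (intro allI)
    fix P A B assume L: "levi_identity bs rv ct" and E: "EHIC bs rv ct"
    have L': "\<And>P A. bs (rv P A) = Cn (bs (ct P (Neg A)) \<union> {A})"
      using L by (simp add: levi_identity_def)
    have e: "bs (ct (ct P A) (Neg B)) = (bs P \<inter> bs (rv P B)) \<inter> (bs (rv P (Neg A)) \<inter> bs (rv (rv P (Neg A)) B))"
      using E nn unfolding EHIC_def by auto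
    have "bs (rv (ct P A) B) = Cn (((bs P \<inter> bs (rv P B)) \<inter> (bs (rv P (Neg A)) \<inter> bs (rv (rv P (Neg A)) B))) \<union> {B})"
      using L' e by simp
    also have "\<dots> = Cn ((bs P \<inter> bs (rv P B)) \<union> {B}) \<inter> Cn ((bs (rv P (Neg A)) \<inter> bs (rv (rv P (Neg A)) B)) \<union> {B})"
      by (rule Cn_int) (simp_all add: Cn_inter_closed cl)
    also have "\<dots> = bs (rv P B) \<inter> bs (rv (rv P (Neg A)) B)"
      using L'[of P B] L'[of "rv P (Neg A)" B] H[of P "Neg B"] H[of "rv P (Neg A)" "Neg B"] nn by simp
    finally show "bs (rv (ct P A) B) = bs (rv P B) \<inter> bs (rv (rv P (Neg A)) B)" .
  qed
  show ?thesis using 1 2 by blast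
qed

end
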